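(* Consider the differential equation $\dot z = iz + a(z\overline z)^n z^{k+1}$, $z\in\mathbb{C}$, with $a\in\mathbb{C}$, $a\neq0$, and $n,k$ nonnegative integers. (i) If $n=0$, the origin is an isochronous center. (ii) If $k=0$ (and $n\ge 1$), the origin is a center if and only if $\operatorname{Re}(a)=0$. Moreover, when $a=\alpha i$ with $\alpha\in\mathbb{R}\setminus\{0\}$, the function $V(z,\overline z)=z\overline z$ is a first integral, and the period function of the origin, parametrized by $u=z\overline z$, is \[ T(u)=\frac{2\pi}{1+\alpha u^n}. \] In particular, when $\alpha>0$ the origin is a global center whose period function is decreasing and tends to $0$ at infinity; when $\alpha<0$ the period annulus of the origin is $\{z\overline z<(-1/\alpha)^{1/n}\}$, its boundary $\{z\overline z=(-1/\alpha)^{1/n}\}$ consists of equilibria, and the period function is increasing and tends to $+\infty$ at this boundary.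
   Context: The period function of a center assigns to each periodic orbit in its period annulus (the largest punctured neighborhood of the center foliated by periodic orbits) its minimal period. An isochronous center is one whose period function is constant. *)

theory Defs
  imports "HOL-Analysis.Analysis"
begin

definition the_field :: "complex \<Rightarrow> nat \<Rightarrow> nat \<Rightarrow> complex \<Rightarrow> complex" where
  "the_field a n k z = \<i> * z + a * (z * cnj z) ^ n * z ^ (k + 1)"

definition is_solution :: "(complex \<Rightarrow> complex) \<Rightarrow> (real \<Rightarrow> complex) \<Rightarrow> bool" where
  "is_solution F x \<longleftrightarrow> (\<forall>t. (x has_vector_derivative F (x t)) (at t))"

definition is_period :: "(complex \<Rightarrow> complex) \<Rightarrow> complex \<Rightarrow> real \<Rightarrow> bool" where
  "is_period F p T \<longleftrightarrow> T > 0 \<and>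
     (\<exists>x. is_solution F x \<and> x 0 = p \<and> (\<forall>t. x (t + T) = x t))"

definition periodic_point :: "(complex \<Rightarrow> complex) \<Rightarrow> complex \<Rightarrow> bool" where
  "periodic_point F p \<longleftrightarrow> F p \<noteq> 0 \<and> (\<exists>T. is_period F p T)"

definition min_period :: "(complex \<Rightarrow> complex) \<Rightarrow> complex \<Rightarrow> real" where
  "min_period F p = Inf {T. is_period F p T}"

definition center :: "(complex \<Rightarrow> complex) \<Rightarrow> complex \<Rightarrow> bool" where
  "center F z0 \<longleftrightarrow> F z0 = 0 \<and>
     (\<exists>r>0. \<forall>p \<in> ball z0 r - {z0}. periodic_point F p)"

definition period_annulus :: "(complex \<Rightarrow> complex) \<Rightarrow> complex \<Rightarrow> complex set" where
  "period_annulus F z0 =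
     \<Union>{U. open U \<and> connected U \<and> z0 \<in> U \<and> (\<forall>p \<in> U - {z0}. periodic_point F p)} - {z0}"

definition isochronous_center :: "(complex \<Rightarrow> complex) \<Rightarrow> complex \<Rightarrow> bool" where
  "isochronous_center F z0 \<longleftrightarrow> center F z0 \<and>
     (\<exists>c. \<forall>p \<in> period_annulus F z0. min_period F p = c)"

definition global_center :: "(complex \<Rightarrow> complex) \<Rightarrow> complex \<Rightarrow> bool" where
  "global_center F z0 \<longleftrightarrow> center F z0 \<and> period_annulus F z0 = UNIV - {z0}"

definition first_integral :: "(complex \<Rightarrow> complex) \<Rightarrow> (complex \<Rightarrow> 'a) \<Rightarrow> bool" where
  "first_integral F V \<longleftrightarrow>
     (\<forall>x I. is_interval I \<and> (\<forall>t\<in>I. (x has_vector_derivative F (x t)) (at t within I))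
        \<longrightarrow> (\<exists>c. \<forall>t\<in>I. V (x t) = c))"

end

theory Submission
  imports Defs
begin


definition om :: "real \<Rightarrow> nat \<Rightarrow> complex \<Rightarrow> real" where
  "om \<alpha> n z = 1 + \<alpha> * (cmod z ^ 2) ^ n"

lemma F2_eq: "the_field (complex_of_real \<alpha> * \<i>) n 0 z = \<i> * complex_of_real (om \<alpha> n z) * z"
  unfolding the_field_def om_def
  by (simp add: complex_norm_square[symmetric] algebra_simps)

lemma d_cexp: "((\<lambda>t. exp (c * complex_of_real t)) has_vector_derivative (c * exp (c * complex_of_real t))) (at t within S)"
  by (rule has_vector_derivative_real_field) (auto intro!: derivative_eq_intros)

lemma fi_k0: "first_integral (the_field (complex_of_real \<alpha> * \<i>) n 0) (\<lambda>z. z * cnj z)"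
  unfolding first_integral_def
proof (intro allI impI)
  fix x :: "real \<Rightarrow> complex" and I :: "real set"
  assume h: "is_interval I \<and> (\<forall>t\<in>I. (x has_vector_derivative the_field (complex_of_real \<alpha> * \<i>) n 0 (x t)) (at t within I))"
  have "convex I" using h is_interval_convex by blast
  moreover have "((\<lambda>t. x t * cnj (x t)) has_derivative (\<lambda>h. 0)) (at t within I)" if "t \<in> I" for t
  proof -
    define v where "v = the_field (complex_of_real \<alpha> * \<i>) n 0 (x t)"
    have d: "(x has_vector_derivative v) (at t within I)" using h that v_def by blast
    have "((\<lambda>t. x t * cnj (x t)) has_vector_derivative (x t * cnj v + v * cnj (x t))) (at t within I)"
      by (intro derivative_intros d)
    moreover have "x t * cnj v + v * cnj (x t) = 0" unfolding v_def F2_eq by (simp add: algebra_simps)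
    ultimately show ?thesis by (simp add: has_vector_derivative_def)
  qed
  ultimately show "\<exists>c. \<forall>t\<in>I. x t * cnj (x t) = c"
    using has_derivative_zero_constant[of I "\<lambda>t. x t * cnj (x t)"] by blast
qed

lemma sol_k0:
  assumes "is_solution (the_field (complex_of_real \<alpha> * \<i>) n 0) x"
  shows "x t = x 0 * exp (\<i> * complex_of_real (om \<alpha> n (x 0)) * complex_of_real t)"
proof -
  have "\<exists>c. \<forall>t\<in>UNIV. x t * cnj (x t) = c"
    using fi_k0[of \<alpha> n] assms unfolding first_integral_def is_solution_def
    by (metis is_interval_univ UNIV_I)
  then have "x s * cnj (x s) = x 0 * cnj (x 0)" for s by (metis UNIV_I)
  then have "complex_of_real (cmod (x s) ^ 2) = complex_of_real (cmod (x 0) ^ 2)" for s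
    by (simp only: complex_norm_square)
  then have "cmod (x s) = cmod (x 0)" for s
    by (metis of_real_eq_iff norm_ge_zero power2_eq_iff_nonneg)
  then have om: "om \<alpha> n (x s) = om \<alpha> n (x 0)" for s unfolding om_def by metis
  define w where "w = om \<alpha> n (x 0)"
  define E where "E s = x s * exp (- (\<i> * of_real w) * of_real s)" for s
  have "(E has_derivative (\<lambda>h. 0)) (at s within UNIV)" for s
  proof -
    have dx: "(x has_vector_derivative (\<i> * of_real w * x s)) (at s)"
      using assms om[of s] unfolding is_solution_def F2_eq w_def by metis
    have "(E has_vector_derivative (x s * (- (\<i> * of_real w) * exp (- (\<i> * of_real w) * of_real s)) + (\<i> * of_real w * x s) * exp (- (\<i> * of_real w) * of_real s))) (at s)"
      unfolding E_def by (intro has_vector_derivative_mult dx d_cexp)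
    then show ?thesis by (simp add: has_vector_derivative_def algebra_simps)
  qed
  then obtain c where "\<forall>s\<in>UNIV. E s = c"
    using has_derivative_zero_constant[of UNIV E] by blast
  then have "E t = E 0" by simp
  then have "x t * exp (- (\<i> * of_real w) * of_real t) = x 0" by (simp add: E_def)
  then have "x t = x 0 * exp (\<i> * of_real w * of_real t)"
    by (simp add: exp_minus field_simps)
  then show ?thesis by (simp add: w_def)
qed

lemma per_k0:
  assumes p: "p \<noteq> 0" and w: "om \<alpha> n p > 0"
  shows "periodic_point (the_field (complex_of_real \<alpha> * \<i>) n 0) p"
    and "min_period (the_field (complex_of_real \<alpha> * \<i>) n 0) p = 2 * pi / om \<alpha> n p"
proof -
  define F where "F = the_field (complex_of_real \<alpha> * \<i>) n 0"
  define w where "w = om \<alpha> n p"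
  have wpos: "w > 0" using w w_def by simp
  define X where "X t = p * exp (\<i> * of_real w * of_real t)" for t
  have nX: "cmod (X t) = cmod p" for t
    by (simp add: X_def norm_mult)
  have omX: "om \<alpha> n (X t) = w" for t using nX by (simp add: om_def w_def)
  have sol: "is_solution F X"
    unfolding is_solution_def
  proof
    fix t
    have "(X has_vector_derivative (p * (\<i> * of_real w * exp (\<i> * of_real w * of_real t)))) (at t)"
      unfolding X_def by (intro has_vector_derivative_mult_right d_cexp)
    moreover have "p * (\<i> * of_real w * exp (\<i> * of_real w * of_real t)) = F (X t)"
      unfolding F_def F2_eq omX by (simp add: X_def)
    ultimately show "(X has_vector_derivative F (X t)) (at t)" by simp
  qed
  have perX: "X (t + 2 * pi / w) = X t" for t
  proof -
    have "\<i> * of_real w * of_real (t + 2 * pi / w) = \<i> * of_real w * of_real t + 2 * of_real pi * \<i>"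
      using wpos by (simp add: field_simps)
    then show ?thesis by (simp add: X_def exp_add)
  qed
  have isp: "is_period F p (2 * pi / w)"
    unfolding is_period_def using sol perX wpos by (auto intro!: exI[of _ X] simp: X_def)
  have Fp: "F p \<noteq> 0" unfolding F_def F2_eq using p wpos w_def by simp
  show "periodic_point (the_field (complex_of_real \<alpha> * \<i>) n 0) p"
    using isp Fp unfolding periodic_point_def F_def by blast
  have lb: "2 * pi / w \<le> T" if hT: "is_period F p T" for T
  proof -
    obtain x where x: "is_solution F x" "x 0 = p" "\<And>t. x (t + T) = x t" and T: "T > 0"
      using hT unfolding is_period_def by blast
    have "x T = x 0" using x(3)[of 0] by simp
    moreover have "x T = p * exp (\<i> * of_real w * of_real T)"
      using sol_k0[of \<alpha> n x T] x(1,2) unfolding F_def w_def by simp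
    ultimately have "exp (\<i> * of_real w * of_real T) = 1" using p x(2) by simp
    then obtain m :: int where m: "w * T = of_int (2 * m) * pi" by (auto simp: exp_eq_1)
    have "w * T > 0" using wpos T by simp
    then have "m > 0" using m by (smt (verit, ccfv_SIG) mult_nonpos_nonneg of_int_le_0_iff pi_gt_zero)
    then have "w * T \<ge> 2 * pi" using m by simp
    then show ?thesis using wpos by (simp add: field_simps)
  qed
  have "Inf {T. is_period F p T} = 2 * pi / w"
    by (rule cInf_eq_minimum) (use isp lb in auto)
  then show "min_period (the_field (complex_of_real \<alpha> * \<i>) n 0) p = 2 * pi / om \<alpha> n p"
    unfolding min_period_def F_def w_def by simp
qed

lemma R_props:
  assumes "\<alpha> < 0" "n \<ge> 1"
  shows "(-1/\<alpha>) powr (1/real n) > 0" "((-1/\<alpha>) powr (1/real n)) ^ n = -1/\<alpha>"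
proof -
  have c: "-1/\<alpha> > 0" using assms by simp
  show "(-1/\<alpha>) powr (1/real n) > 0" using c by simp
  have "((-1/\<alpha>) powr (1/real n)) ^ n = ((-1/\<alpha>) powr (1/real n)) powr (real n)"
    using c by (simp add: powr_realpow)
  also have "\<dots> = -1/\<alpha>" using c assms by (simp add: powr_powr)
  finally show "((-1/\<alpha>) powr (1/real n)) ^ n = -1/\<alpha>" .
qed

lemma om_neg:
  assumes "\<alpha> < 0" "n \<ge> 1"
  shows "om \<alpha> n z > 0 \<longleftrightarrow> cmod z ^ 2 < (-1/\<alpha>) powr (1/real n)"
    and "om \<alpha> n z = 0 \<longleftrightarrow> cmod z ^ 2 = (-1/\<alpha>) powr (1/real n)"
proof -
  define R where "R = (-1/\<alpha>) powr (1/real n)"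
  define s where "s = cmod z ^ 2"
  have R: "R > 0" "R ^ n = -1/\<alpha>" using R_props[OF assms] by (auto simp: R_def)
  have s: "s \<ge> 0" by (simp add: s_def)
  have n0: "n \<noteq> 0" using assms by simp
  have "om \<alpha> n z > 0 \<longleftrightarrow> s ^ n < -1/\<alpha>"
    using neg_less_divide_eq[OF assms(1), of "s^n" "-1"] by (auto simp: om_def s_def algebra_simps)
  also have "\<dots> \<longleftrightarrow> s ^ n < R ^ n" using R by simp
  also have "\<dots> \<longleftrightarrow> s < R" using s R(1) n0
    by (meson power_less_imp_less_base power_strict_mono less_imp_le not_gr0)
  finally show "om \<alpha> n z > 0 \<longleftrightarrow> cmod z ^ 2 < (-1/\<alpha>) powr (1/real n)" by (simp add: s_def R_def)
  have "om \<alpha> n z = 0 \<longleftrightarrow> s ^ n = -1/\<alpha>"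
    using eq_divide_eq[of "s^n" "-1" \<alpha>] assms(1) by (auto simp: om_def s_def algebra_simps)
  also have "\<dots> \<longleftrightarrow> s ^ n = R ^ n" using R by simp
  also have "\<dots> \<longleftrightarrow> s = R" using s R(1) n0
    using power_eq_iff_eq_base[of n s R] by auto
  finally show "om \<alpha> n z = 0 \<longleftrightarrow> cmod z ^ 2 = (-1/\<alpha>) powr (1/real n)" by (simp add: s_def R_def)
qed

lemma ann_pos:
  assumes "\<alpha> > 0"
  shows "period_annulus (the_field (complex_of_real \<alpha> * \<i>) n 0) 0 = UNIV - {0}"
proof -
  have "om \<alpha> n p > 0" for p using assms by (simp add: om_def add_pos_nonneg)
  then have "\<forall>p\<in>UNIV - {0}. periodic_point (the_field (complex_of_real \<alpha> * \<i>) n 0) p"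
    using per_k0(1) by blast
  then show ?thesis unfolding period_annulus_def by auto
qed

lemma ann_neg:
  assumes "\<alpha> < 0" "n \<ge> 1"
  shows "period_annulus (the_field (complex_of_real \<alpha> * \<i>) n 0) 0
     = {z. 0 < cmod z ^ 2 \<and> cmod z ^ 2 < (-1/\<alpha>) powr (1/real n)}"
proof -
  define R where "R = (-1/\<alpha>) powr (1/real n)"
  define F where "F = the_field (complex_of_real \<alpha> * \<i>) n 0"
  have R: "R > 0" using R_props[OF assms] by (auto simp: R_def)
  have "z \<in> period_annulus F 0" if z: "0 < cmod z ^ 2" "cmod z ^ 2 < R" for z
  proof -
    have "cmod z < sqrt R" using z by (simp add: real_less_rsqrt)
    moreover have "\<forall>p\<in>ball 0 (sqrt R) - {0}. periodic_point F p"
    proof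
      fix p :: complex assume "p \<in> ball 0 (sqrt R) - {0}"
      then have "p \<noteq> 0" "cmod p < sqrt R" by auto
      then have "cmod p ^ 2 < (sqrt R) ^ 2" by (intro power_strict_mono) auto
      then have "cmod p ^ 2 < R" using R by simp
      then show "periodic_point F p" unfolding F_def using per_k0(1)[OF \<open>p \<noteq> 0\<close>] om_neg(1)[OF assms] R_def by blast
    qed
    ultimately show ?thesis unfolding period_annulus_def using z R
      by (auto intro!: exI[of _ "ball 0 (sqrt R)"] convex_connected)
  qed
  moreover have "cmod z ^ 2 < R" if z: "z \<in> period_annulus F 0" for z
  proof -
    obtain U where U: "open U" "connected U" "0 \<in> U" "\<forall>p\<in>U - {0}. periodic_point F p" "z \<in> U" "z \<noteq> 0"
      using z unfolding period_annulus_def by blast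
    define A where "A = {z::complex. cmod z ^ 2 < R}"
    define B where "B = {z::complex. R < cmod z ^ 2}"
    have oA: "open A" unfolding A_def by (intro open_Collect_less continuous_intros)
    have oB: "open B" unfolding B_def by (intro open_Collect_less continuous_intros)
    have "U \<subseteq> A \<union> B"
    proof
      fix q assume q: "q \<in> U"
      show "q \<in> A \<union> B"
      proof (rule ccontr)
        assume "q \<notin> A \<union> B"
        then have qR: "cmod q ^ 2 = R" unfolding A_def B_def by auto
        then have "q \<noteq> 0" using R by auto
        then have "periodic_point F q" using U q by blast
        moreover have "F q = 0" unfolding F_def F2_eq using om_neg(2)[OF assms, of q] qR R_def by simp
        ultimately show False unfolding periodic_point_def by blast
      qed
    qed
    moreover have "A \<inter> B \<inter> U = {}" unfolding A_def B_def by auto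
    ultimately have "A \<inter> U = {} \<or> B \<inter> U = {}" using connectedD[OF U(2) oA oB] by blast
    moreover have "0 \<in> A \<inter> U" using U R by (simp add: A_def)
    ultimately have "B \<inter> U = {}" by blast
    then show ?thesis using \<open>U \<subseteq> A \<union> B\<close> U(5) unfolding A_def B_def by auto
  qed
  moreover have "z \<in> period_annulus F 0 \<Longrightarrow> z \<noteq> 0" for z unfolding period_annulus_def by auto
  ultimately show ?thesis unfolding F_def[symmetric] R_def[symmetric] by auto
qed

lemma dnorm_k0:
  assumes "is_solution (the_field a n 0) x"
  shows "((\<lambda>t. cmod (x t) ^ 2) has_real_derivative (2 * Re a * (cmod (x t) ^ 2) ^ (n + 1))) (at t)"
proof -
  define v where "v = the_field a n 0 (x t)"
  have d: "(x has_vector_derivative v) (at t)" using assms unfolding is_solution_def v_def by blast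
  have "((\<lambda>t. x t * cnj (x t)) has_vector_derivative (x t * cnj v + v * cnj (x t))) (at t)"
    by (intro derivative_intros d)
  then have "((\<lambda>t. Re (x t * cnj (x t))) has_vector_derivative Re (x t * cnj v + v * cnj (x t))) (at t)"
    by (rule bounded_linear.has_vector_derivative[OF bounded_linear_Re])
  moreover have "Re (x s * cnj (x s)) = cmod (x s) ^ 2" for s
    by (metis Re_complex_of_real complex_norm_square)
  moreover have "Re (x t * cnj v + v * cnj (x t)) = 2 * Re a * (cmod (x t) ^ 2) ^ (n + 1)"
  proof -
    define q where "q = cmod (x t) ^ 2"
    have q: "x t * cnj (x t) = of_real q" by (simp only: q_def complex_norm_square)
    have "v * cnj (x t) = \<i> * of_real q + a * of_real q ^ n * of_real q"
      unfolding v_def the_field_def using q by (simp add: algebra_simps)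
    moreover have "x t * cnj v = cnj (v * cnj (x t))" by simp
    ultimately have "x t * cnj v + v * cnj (x t) = cnj (\<i> * of_real q + a * of_real q ^ n * of_real q) + (\<i> * of_real q + a * of_real q ^ n * of_real q)"
      by simp
    then show ?thesis by (simp add: q_def algebra_simps)
  qed
  ultimately show ?thesis by (simp add: has_real_derivative_iff_has_vector_derivative)
qed

lemma center_k0_imp:
  assumes "center (the_field a n 0) 0"
  shows "Re a = 0"
proof (rule ccontr)
  assume ra: "Re a \<noteq> 0"
  define F where "F = the_field a n 0"
  obtain r where r: "r > 0" "\<forall>p\<in>ball 0 r - {0}. periodic_point F p"
    using assms unfolding center_def F_def by blast
  define p where "p = complex_of_real (r/2)"
  have "p \<in> ball 0 r - {0}" using r by (simp add: p_def)
  then have "periodic_point F p" using r by blast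
  then obtain T x where x: "is_solution F x" "x 0 = p" "\<And>t. x (t + T) = x t" and T: "T > 0"
    unfolding periodic_point_def is_period_def by blast
  define f where "f t = cmod (x t) ^ 2" for t
  have df: "DERIV f t :> 2 * Re a * (f t) ^ (n + 1)" for t
    unfolding f_def using dnorm_k0 x(1) F_def by blast
  have fT: "f T = f 0" using x(3)[of 0] by (simp add: f_def)
  have f0: "f 0 > 0" unfolding f_def x(2) p_def using r by simp
  obtain \<xi> where xi: "0 < \<xi>" "\<xi> < T" "f T - f 0 = (T - 0) * (2 * Re a * (f \<xi>) ^ (n + 1))"
    using MVT2[OF T, of f "\<lambda>t. 2 * Re a * (f t) ^ (n + 1)"] df by blast
  then have "f \<xi> = 0" using fT T ra by auto
  show False
  proof (cases "Re a > 0")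
    case True
    have "f 0 \<le> f \<xi>"
      by (rule DERIV_nonneg_imp_nondecreasing[of 0 \<xi> f]) (use xi True df in \<open>auto intro!: exI simp: f_def\<close>)
    then show False using f0 \<open>f \<xi> = 0\<close> by simp
  next
    case False
    then have "Re a < 0" using ra by simp
    have "f T \<le> f \<xi>"
      by (rule DERIV_nonpos_imp_nonincreasing[of \<xi> T f]) (use xi \<open>Re a < 0\<close> df in \<open>auto intro!: exI simp: f_def mult_nonpos_nonneg\<close>)
    then show False using f0 fT \<open>f \<xi> = 0\<close> by simp
  qed
qed

lemma ann_periodic: "p \<in> period_annulus F z0 \<Longrightarrow> periodic_point F p"
  unfolding period_annulus_def by blast

lemma ann_om:
  assumes "\<alpha> \<noteq> 0" "n \<ge> 1" "p \<in> period_annulus (the_field (complex_of_real \<alpha> * \<i>) n 0) 0"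
  shows "p \<noteq> 0" "om \<alpha> n p > 0"
proof -
  show "p \<noteq> 0" using assms(3) unfolding period_annulus_def by blast
  show "om \<alpha> n p > 0"
  proof (cases "\<alpha> > 0")
    case True then show ?thesis by (simp add: om_def add_pos_nonneg)
  next
    case False
    then have "\<alpha> < 0" using assms(1) by simp
    then show ?thesis using assms(3) ann_neg[OF \<open>\<alpha> < 0\<close> assms(2)] om_neg(1)[OF \<open>\<alpha> < 0\<close> assms(2)] by auto
  qed
qed

lemma lim_inf_k0:
  assumes "\<alpha> > 0" "n \<ge> 1"
  shows "((min_period (the_field (complex_of_real \<alpha> * \<i>) n 0)) \<longlongrightarrow> 0) at_infinity"
proof -
  define F where "F = the_field (complex_of_real \<alpha> * \<i>) n 0"
  have ompos: "om \<alpha> n p > 0" for p using assms by (simp add: om_def add_pos_nonneg)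
  have ev: "eventually (\<lambda>z. 2 * pi / om \<alpha> n z = min_period F z) at_infinity"
    unfolding eventually_at_infinity
  proof (rule exI[of _ 1], intro allI impI)
    fix z :: complex assume "1 \<le> norm z"
    then have "z \<noteq> 0" by auto
    then show "2 * pi / om \<alpha> n z = min_period F z" unfolding F_def using per_k0(2)[OF _ ompos] by metis
  qed
  have l1: "filterlim (\<lambda>z::complex. \<alpha> * norm z) at_top at_infinity"
    by (rule filterlim_tendsto_pos_mult_at_top[OF tendsto_const assms(1) filterlim_norm_at_top])
  have "eventually (\<lambda>z. \<alpha> * norm z \<le> om \<alpha> n z) at_infinity"
    unfolding eventually_at_infinity
  proof (rule exI[of _ 1], intro allI impI)
    fix z :: complex assume z: "1 \<le> norm z"
    have "norm z \<le> norm z ^ 2" using z by (metis power_increasing[of 1 2 "norm z"] one_le_numeral power_one_right)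
    also have "\<dots> \<le> (norm z ^ 2) ^ n"
      using z assms(2) power_increasing[of 1 n "norm z ^ 2"] by (simp add: one_le_power)
    finally have "\<alpha> * norm z \<le> \<alpha> * (norm z ^ 2) ^ n" using assms(1) by simp
    then show "\<alpha> * norm z \<le> om \<alpha> n z" by (simp add: om_def)
  qed
  then have "filterlim (om \<alpha> n) at_top at_infinity" using filterlim_at_top_mono[OF l1] by blast
  then have "((\<lambda>z. 2 * pi / om \<alpha> n z) \<longlongrightarrow> 0) at_infinity"
    by (intro tendsto_divide_0[OF tendsto_const] filterlim_at_top_imp_at_infinity)
  then show ?thesis using tendsto_cong[OF ev] unfolding F_def by blast
qed

lemma lim_bd_k0:
  assumes "\<alpha> < 0" "n \<ge> 1" "om \<alpha> n b = 0"
  shows "filterlim (min_period (the_field (complex_of_real \<alpha> * \<i>) n 0)) at_top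
           (at b within period_annulus (the_field (complex_of_real \<alpha> * \<i>) n 0) 0)"
proof -
  define F where "F = the_field (complex_of_real \<alpha> * \<i>) n 0"
  define A where "A = period_annulus F 0"
  have inA: "p \<noteq> 0" "om \<alpha> n p > 0" if "p \<in> A" for p
    using ann_om[of \<alpha> n p] that assms by (auto simp: A_def F_def)
  have ev: "eventually (\<lambda>z. 2 * pi * inverse (om \<alpha> n z) = min_period F z) (at b within A)"
    unfolding eventually_at_filter
  proof (rule always_eventually, intro allI impI)
    fix z assume "z \<noteq> b" "z \<in> A"
    then show "2 * pi * inverse (om \<alpha> n z) = min_period F z"
      unfolding F_def using per_k0(2)[OF inA] by (metis divide_inverse)
  qed
  have t: "((\<lambda>z. om \<alpha> n z) \<longlongrightarrow> om \<alpha> n b) (at b within A)"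
    unfolding om_def by (intro tendsto_intros)
  have ev2: "eventually (\<lambda>z. 0 < om \<alpha> n z) (at b within A)"
    unfolding eventually_at_filter by (rule always_eventually) (auto simp: inA)
  have "filterlim (\<lambda>z. 2 * pi * inverse (om \<alpha> n z)) at_top (at b within A)"
    by (rule filterlim_tendsto_pos_mult_at_top[OF tendsto_const _ filterlim_inverse_at_top])
       (use t assms(3) ev2 in auto)
  then show ?thesis using filterlim_cong[OF refl refl ev] unfolding A_def F_def by blast
qed

lemma center_k0_if:
  assumes "a \<noteq> 0" "n \<ge> 1" "Re a = 0"
  shows "center (the_field a n 0) 0"
proof -
  define \<alpha> where "\<alpha> = Im a"
  have a: "a = complex_of_real \<alpha> * \<i>" using assms(3) by (simp add: complex_eq_iff \<alpha>_def)
  have al: "\<alpha> \<noteq> 0" using assms(1) a by auto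
  define F where "F = the_field (complex_of_real \<alpha> * \<i>) n 0"
  have F0: "F 0 = 0" by (simp add: F_def the_field_def)
  have "\<exists>r>0. \<forall>p\<in>ball 0 r - {0}. periodic_point F p"
  proof (cases "\<alpha> > 0")
    case True
    have "periodic_point F p" if "p \<in> ball 0 1 - {0}" for p
    proof -
      have "p \<in> period_annulus F 0" unfolding F_def ann_pos[OF True, of n] using that by simp
      then show ?thesis by (rule ann_periodic)
    qed
    then show ?thesis by (intro exI[of _ 1]) simp
  next
    case False
    then have neg: "\<alpha> < 0" using al by simp
    define R where "R = (-1/\<alpha>) powr (1/real n)"
    have R: "R > 0" using R_props[OF neg assms(2)] by (simp add: R_def)
    have "periodic_point F p" if p: "p \<in> ball 0 (sqrt R) - {0}" for p
    proof -
      have "cmod p < sqrt R" "p \<noteq> 0" using p by auto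
      then have "cmod p ^ 2 < (sqrt R) ^ 2" by (intro power_strict_mono) auto
      then have "cmod p ^ 2 < R" using R by simp
      then have "p \<in> period_annulus F 0" unfolding F_def ann_neg[OF neg assms(2)] R_def[symmetric]
        using \<open>p \<noteq> 0\<close> by simp
      then show ?thesis by (rule ann_periodic)
    qed
    moreover have "sqrt R > 0" using R by simp
    ultimately show ?thesis by blast
  qed
  then show ?thesis using F0 unfolding center_def F_def a by blast
qed



lemma part2_al:
  fixes a :: complex and n :: nat and \<alpha> :: real
  assumes "n \<ge> 1" "\<alpha> \<noteq> 0" "a = \<alpha> * \<i>"
  shows "first_integral (the_field a n 0) (\<lambda>z. z * cnj z)
        \<and> (\<forall>p \<in> period_annulus (the_field a n 0) 0.
             min_period (the_field a n 0) p = 2 * pi / (1 + \<alpha> * (cmod p ^ 2) ^ n))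
        \<and> (\<alpha> > 0 \<longrightarrow>
             global_center (the_field a n 0) 0
           \<and> (\<forall>p \<in> period_annulus (the_field a n 0) 0. \<forall>q \<in> period_annulus (the_field a n 0) 0.
                cmod p < cmod q \<longrightarrow> min_period (the_field a n 0) q < min_period (the_field a n 0) p)
           \<and> ((min_period (the_field a n 0)) \<longlongrightarrow> 0) at_infinity)
        \<and> (\<alpha> < 0 \<longrightarrow>
             period_annulus (the_field a n 0) 0 = {z. 0 < cmod z ^ 2 \<and> cmod z ^ 2 < (-1/\<alpha>) powr (1/n)}
           \<and> (\<forall>z. cmod z ^ 2 = (-1/\<alpha>) powr (1/n) \<longrightarrow> the_field a n 0 z = 0)
           \<and> (\<forall>p \<in> period_annulus (the_field a n 0) 0. \<forall>q \<in> period_annulus (the_field a n 0) 0.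
                cmod p < cmod q \<longrightarrow> min_period (the_field a n 0) p < min_period (the_field a n 0) q)
           \<and> (\<forall>b. cmod b ^ 2 = (-1/\<alpha>) powr (1/n) \<longrightarrow>
                filterlim (min_period (the_field a n 0)) at_top
                  (at b within period_annulus (the_field a n 0) 0)))"
proof -
  have a: "a = complex_of_real \<alpha> * \<i>" and al: "\<alpha> \<noteq> 0" using assms by auto
  define F where "F = the_field (complex_of_real \<alpha> * \<i>) n 0"
  have Fa: "the_field a n 0 = F" by (simp add: F_def a)
  have mp: "min_period F p = 2 * pi / om \<alpha> n p" if "p \<in> period_annulus F 0" for p
    using per_k0(2)[OF ann_om(1,2)[OF al assms(1)]] that unfolding F_def by blast
  have omp: "om \<alpha> n p > 0" if "p \<in> period_annulus F 0" for p
    using ann_om(2)[OF al assms(1)] that unfolding F_def by blast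
  have pw: "(cmod p ^ 2) ^ n < (cmod q ^ 2) ^ n" if "cmod p < cmod q" for p q
    using that assms(1) by (intro power_strict_mono) auto
  have c1: "first_integral F (\<lambda>z. z * cnj z)" unfolding F_def by (rule fi_k0)
  have c2: "\<forall>p \<in> period_annulus F 0. min_period F p = 2 * pi / (1 + \<alpha> * (cmod p ^ 2) ^ n)"
    using mp unfolding om_def by blast
  have c3: "global_center F 0
           \<and> (\<forall>p \<in> period_annulus F 0. \<forall>q \<in> period_annulus F 0.
                cmod p < cmod q \<longrightarrow> min_period F q < min_period F p)
           \<and> ((min_period F) \<longlongrightarrow> 0) at_infinity" if pos: "\<alpha> > 0"
  proof (intro conjI ballI impI)
    have "center F 0" using center_k0_if[of "complex_of_real \<alpha> * \<i>" n] al assms(1) unfolding F_def by simp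
    then show "global_center F 0"
      unfolding global_center_def F_def using ann_pos[OF pos] by simp
    fix p q assume pq: "p \<in> period_annulus F 0" "q \<in> period_annulus F 0" "cmod p < cmod q"
    have "om \<alpha> n p < om \<alpha> n q" using pw[OF pq(3)] pos by (simp add: om_def)
    then show "min_period F q < min_period F p"
      unfolding mp[OF pq(1)] mp[OF pq(2)] using omp[OF pq(1)] by (simp add: divide_strict_left_mono)
  next
    show "((min_period F) \<longlongrightarrow> 0) at_infinity" unfolding F_def by (rule lim_inf_k0[OF pos assms(1)])
  qed
  have c4: "period_annulus F 0 = {z. 0 < cmod z ^ 2 \<and> cmod z ^ 2 < (-1/\<alpha>) powr (1/n)}
           \<and> (\<forall>z. cmod z ^ 2 = (-1/\<alpha>) powr (1/n) \<longrightarrow> F z = 0)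
           \<and> (\<forall>p \<in> period_annulus F 0. \<forall>q \<in> period_annulus F 0.
                cmod p < cmod q \<longrightarrow> min_period F p < min_period F q)
           \<and> (\<forall>b. cmod b ^ 2 = (-1/\<alpha>) powr (1/n) \<longrightarrow>
                filterlim (min_period F) at_top (at b within period_annulus F 0))" if neg: "\<alpha> < 0"
  proof (intro conjI ballI impI allI)
    show "period_annulus F 0 = {z. 0 < cmod z ^ 2 \<and> cmod z ^ 2 < (-1/\<alpha>) powr (1/n)}"
      unfolding F_def by (rule ann_neg[OF neg assms(1)])
  next
    fix z :: complex assume "cmod z ^ 2 = (-1/\<alpha>) powr (1/n)"
    then have "om \<alpha> n z = 0" using om_neg(2)[OF neg assms(1)] by blast
    then show "F z = 0" unfolding F_def F2_eq by simp
  next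
    fix p q assume pq: "p \<in> period_annulus F 0" "q \<in> period_annulus F 0" "cmod p < cmod q"
    have "om \<alpha> n q < om \<alpha> n p" using pw[OF pq(3)] neg by (simp add: om_def)
    then show "min_period F p < min_period F q"
      unfolding mp[OF pq(1)] mp[OF pq(2)] using omp[OF pq(2)] by (simp add: divide_strict_left_mono)
  next
    fix b :: complex assume "cmod b ^ 2 = (-1/\<alpha>) powr (1/n)"
    then have "om \<alpha> n b = 0" using om_neg(2)[OF neg assms(1)] by blast
    then show "filterlim (min_period F) at_top (at b within period_annulus F 0)"
      unfolding F_def by (rule lim_bd_k0[OF neg assms(1)])
  qed
  show ?thesis unfolding Fa using c1 c2 c3 c4 by blast
qed

lemma part2_all:
  fixes a :: complex and n :: nat
  assumes "n \<ge> 1"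
  shows "\<forall>\<alpha>::real. \<alpha> \<noteq> 0 \<and> a = \<alpha> * \<i> \<longrightarrow>
          first_integral (the_field a n 0) (\<lambda>z. z * cnj z)
        \<and> (\<forall>p \<in> period_annulus (the_field a n 0) 0.
             min_period (the_field a n 0) p = 2 * pi / (1 + \<alpha> * (cmod p ^ 2) ^ n))
        \<and> (\<alpha> > 0 \<longrightarrow>
             global_center (the_field a n 0) 0
           \<and> (\<forall>p \<in> period_annulus (the_field a n 0) 0. \<forall>q \<in> period_annulus (the_field a n 0) 0.
                cmod p < cmod q \<longrightarrow> min_period (the_field a n 0) q < min_period (the_field a n 0) p)
           \<and> ((min_period (the_field a n 0)) \<longlongrightarrow> 0) at_infinity)
        \<and> (\<alpha> < 0 \<longrightarrow>
             period_annulus (the_field a n 0) 0 = {z. 0 < cmod z ^ 2 \<and> cmod z ^ 2 < (-1/\<alpha>) powr (1/n)}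
           \<and> (\<forall>z. cmod z ^ 2 = (-1/\<alpha>) powr (1/n) \<longrightarrow> the_field a n 0 z = 0)
           \<and> (\<forall>p \<in> period_annulus (the_field a n 0) 0. \<forall>q \<in> period_annulus (the_field a n 0) 0.
                cmod p < cmod q \<longrightarrow> min_period (the_field a n 0) p < min_period (the_field a n 0) q)
           \<and> (\<forall>b. cmod b ^ 2 = (-1/\<alpha>) powr (1/n) \<longrightarrow>
                filterlim (min_period (the_field a n 0)) at_top
                  (at b within period_annulus (the_field a n 0) 0)))"
  apply (intro allI impI)
  apply (erule conjE)
  apply (rule part2_al[OF assms])
   apply assumption+
  done

lemma part2:
  fixes a :: complex and n :: nat
  assumes "a \<noteq> 0" "n \<ge> 1"
  shows "center (the_field a n 0) 0 \<longleftrightarrow> Re a = 0"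
  using center_k0_imp center_k0_if assms by blast



lemma lin_ode_zero:
  fixes D g :: "real \<Rightarrow> complex"
  assumes cg: "continuous_on UNIV g"
  and dD: "\<And>t. (D has_vector_derivative (g t * D t)) (at t)"
  and D0: "D 0 = 0"
  shows "D t = 0"
proof -
  define M where "M = \<bar>t\<bar>"
  have "continuous_on {-M..M} g" using continuous_on_subset cg by blast
  then obtain G where dG: "\<And>s. s \<in> {-M..M} \<Longrightarrow> (G has_vector_derivative g s) (at s within {-M..M})"
    using antiderivative_continuous[of "-M" M g] by blast
  define E where "E s = D s * exp (- G s)" for s
  have dE: "(E has_vector_derivative 0) (at s within {-M..M})" if "s \<in> {-M..M}" for s
  proof -
    have d0: "((\<lambda>s. - G s) has_vector_derivative (- g s)) (at s within {-M..M})"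
      using dG[OF that] by (rule derivative_intros)
    have d1: "((\<lambda>s. exp (- G s)) has_vector_derivative (- g s * exp (-G s))) (at s within {-M..M})"
      using field_vector_diff_chain_within[OF d0, of exp "exp (- G s)"]
      by (auto simp: o_def intro: DERIV_exp[THEN has_field_derivative_at_within])
    have "(E has_vector_derivative (D s * (- g s * exp (-G s)) + g s * D s * exp (- G s))) (at s within {-M..M})"
      unfolding E_def by (rule has_vector_derivative_mult[OF has_vector_derivative_at_within[OF dD] d1])
    then show ?thesis by (simp add: algebra_simps)
  qed
  obtain c where c: "\<forall>s\<in>{-M..M}. E s = c"
    using has_derivative_zero_constant[of "{-M..M}" E] dE by (auto simp: has_vector_derivative_def)
  have "t \<in> {-M..M}" "0 \<in> {-M..M}" by (auto simp: M_def)
  then have "E t = E 0" using c by metis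
  then show ?thesis using D0 by (simp add: E_def)
qed


lemma F1_eq: "the_field a 0 k z = \<i> * z + a * z ^ (k + 1)"
  unfolding the_field_def by simp

lemma sol_cont: "is_solution F x \<Longrightarrow> continuous_on UNIV x"
  unfolding is_solution_def
  by (meson continuous_at_imp_continuous_on has_vector_derivative_continuous)

lemma key1:
  assumes k: "k \<ge> 1" and x: "is_solution (the_field a 0 k) x" and p: "x 0 = p" "p \<noteq> 0"
  shows "(x t) ^ k * ((1 - \<i> * a * p ^ k) / p ^ k + \<i> * a * exp (\<i> * of_nat k * of_real t))
         = exp (\<i> * of_nat k * of_real t)"
proof -
  define c where "c = (1 - \<i> * a * p ^ k) / p ^ k"
  define E where "E t = exp (\<i> * of_nat k * of_real t)" for t
  define D where "D t = c * x t ^ k - E t * (1 - \<i> * a * x t ^ k)" for t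
  define g where "g t = of_nat k * (\<i> + a * x t ^ k)" for t
  obtain m where m: "k = Suc m" using k by (cases k) auto
  have cx: "continuous_on UNIV x" using sol_cont[OF x] .
  have cg: "continuous_on UNIV g" unfolding g_def
    by (intro continuous_intros cx)
  have dD: "(D has_vector_derivative (g t * D t)) (at t)" for t
  proof -
    have dx: "(x has_vector_derivative (\<i> * x t + a * x t ^ (k + 1))) (at t)"
      using x unfolding is_solution_def F1_eq by blast
    define Y where "Y = of_nat k * x t ^ k * (\<i> + a * x t ^ k)"
    have dy: "((\<lambda>t. x t ^ k) has_vector_derivative Y) (at t)"
    proof -
      have "((\<lambda>z. z ^ k) \<circ> x has_vector_derivative (\<i> * x t + a * x t ^ (k + 1)) * (of_nat k * x t ^ (k - Suc 0))) (at t)"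
        by (rule field_vector_diff_chain_at[OF dx]) (auto intro!: derivative_eq_intros)
      moreover have "(\<i> * x t + a * x t ^ (k + 1)) * (of_nat k * x t ^ (k - Suc 0)) = Y"
        unfolding Y_def m by (simp add: algebra_simps power_add[symmetric])
      ultimately show ?thesis by (simp add: o_def)
    qed
    have dE: "(E has_vector_derivative (\<i> * of_nat k * E t)) (at t)"
      unfolding E_def by (rule d_cexp)
    have d1: "((\<lambda>t. c * x t ^ k) has_vector_derivative c * Y) (at t)"
      by (rule has_vector_derivative_mult_right[OF dy])
    have d2: "((\<lambda>t. 1 - \<i> * a * x t ^ k) has_vector_derivative (0 - \<i> * a * Y)) (at t)"
      by (rule has_vector_derivative_diff[OF has_vector_derivative_const has_vector_derivative_mult_right[OF dy]])
    have d3: "((\<lambda>t. E t * (1 - \<i> * a * x t ^ k)) has_vector_derivative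
        (E t * (0 - \<i> * a * Y) + \<i> * of_nat k * E t * (1 - \<i> * a * x t ^ k))) (at t)"
      by (rule has_vector_derivative_mult[OF dE d2])
    have d4: "(D has_vector_derivative (c * Y - (E t * (0 - \<i> * a * Y) + \<i> * of_nat k * E t * (1 - \<i> * a * x t ^ k)))) (at t)"
      unfolding D_def by (rule has_vector_derivative_diff[OF d1 d3])
    moreover have "c * Y - (E t * (0 - \<i> * a * Y) + \<i> * of_nat k * E t * (1 - \<i> * a * x t ^ k)) = g t * D t"
      unfolding Y_def g_def D_def by (simp add: algebra_simps)
    ultimately show ?thesis by simp
  qed
  have D0: "D 0 = 0" unfolding D_def E_def c_def using p by (simp add: field_simps)
  have "D t = 0" by (rule lin_ode_zero[OF cg dD D0])
  then show ?thesis unfolding D_def E_def c_def[symmetric] by (simp add: algebra_simps)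
qed



definition cc :: "complex \<Rightarrow> nat \<Rightarrow> complex \<Rightarrow> complex" where
  "cc a k p = (1 - \<i> * a * p ^ k) / p ^ k"
definition bb :: "complex \<Rightarrow> nat \<Rightarrow> complex \<Rightarrow> complex" where
  "bb a k p = \<i> * a / cc a k p"
definition WW :: "complex \<Rightarrow> nat \<Rightarrow> complex \<Rightarrow> complex \<Rightarrow> complex" where
  "WW a k p s = 1 + bb a k p * exp (\<i> * of_nat k * s)"
definition HH :: "complex \<Rightarrow> nat \<Rightarrow> complex \<Rightarrow> complex \<Rightarrow> complex" where
  "HH a k p s = exp (- Ln (WW a k p s) / of_nat k)"

lemma no_sol_eq:
  assumes k: "k \<ge> 1" and a: "a \<noteq> 0" and x: "is_solution (the_field a 0 k) x" and p: "x 0 = p" "p \<noteq> 0"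
  shows "cmod (cc a k p) \<noteq> cmod a"
proof
  assume eq: "cmod (cc a k p) = cmod a"
  define u where "u = \<i> * cc a k p / a"
  have u1: "cmod u = 1" using eq a by (simp add: u_def norm_mult norm_divide)
  then have u0: "u \<noteq> 0" by auto
  define t where "t = Arg u / real k"
  have h: "\<i> * of_nat k * of_real t = \<i> * of_real (Arg u)" using k by (simp add: t_def field_simps)
  have "cis (Arg u) = u" using cis_Arg[OF u0] u1 by (simp add: sgn_div_norm)
  then have e: "exp (\<i> * of_real (Arg u)) = u" by (metis cis_conv_exp)
  have Et: "exp (\<i> * of_nat k * of_real t) = u"
    by (subst h) (rule e)
  have "(x t) ^ k * (cc a k p + \<i> * a * u) = u"
    using key1[OF k x p, of t] Et by (simp add: cc_def)
  moreover have "cc a k p + \<i> * a * u = 0" using a by (simp add: u_def field_simps)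
  ultimately show False using u0 by simp
qed

lemma W_good:
  assumes "cmod (bb a k p) < 1"
  shows "Re (WW a k p (of_real t)) > 0" "WW a k p (of_real t) \<notin> \<real>\<^sub>\<le>\<^sub>0" "WW a k p (of_real t) \<noteq> 0"
proof -
  have n1: "cmod (exp (\<i> * of_nat k * of_real t)) = 1"
    by (simp add: norm_exp_eq_Re)
  have "\<bar>Re (bb a k p * exp (\<i> * of_nat k * of_real t))\<bar> < 1"
    using abs_Re_le_cmod[of "bb a k p * exp (\<i> * of_nat k * of_real t)"] assms n1 by (simp add: norm_mult)
  then show "Re (WW a k p (of_real t)) > 0" by (simp add: WW_def)
  then show "WW a k p (of_real t) \<notin> \<real>\<^sub>\<le>\<^sub>0" "WW a k p (of_real t) \<noteq> 0"
    by (auto simp: complex_nonpos_Reals_iff)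
qed

lemma H_pow:
  assumes "k \<ge> 1" "WW a k p s \<noteq> 0"
  shows "HH a k p s ^ k = 1 / WW a k p s"
proof -
  have "HH a k p s ^ k = exp (of_nat k * (- Ln (WW a k p s) / of_nat k))"
    unfolding HH_def by (rule exp_of_nat_mult[symmetric])
  also have "\<dots> = exp (- Ln (WW a k p s))" using assms(1) by simp
  also have "\<dots> = 1 / WW a k p s" using assms(2) by (simp add: exp_minus divide_inverse)
  finally show ?thesis .
qed

lemma alg1:
  fixes A P :: complex
  assumes "1 - A * P \<noteq> 0" "P \<noteq> 0"
  shows "P * (1 + A / ((1 - A * P) / P)) = 1 / ((1 - A * P) / P)"
proof -
  have "A / ((1 - A * P) / P) = A * P / (1 - A * P)" by simp
  moreover have "1 + A * P / (1 - A * P) = 1 / (1 - A * P)"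
  proof -
    have "1 + A * P / (1 - A * P) = (1 - A * P) / (1 - A * P) + A * P / (1 - A * P)" using assms by simp
    also have "\<dots> = ((1 - A * P) + A * P) / (1 - A * P)" by (simp only: add_divide_distrib)
    finally show ?thesis by simp
  qed
  ultimately show ?thesis by simp
qed

lemma good_facts:
  assumes k: "k \<ge> 1" and a: "a \<noteq> 0" and p: "p \<noteq> 0" and g: "cmod (cc a k p) > cmod a"
  shows "cc a k p \<noteq> 0" "cmod (bb a k p) < 1" "bb a k p * cc a k p = \<i> * a"
    "1 - \<i> * a * p ^ k \<noteq> 0" "p ^ k * WW a k p 0 = 1 / cc a k p"
proof -
  show c0: "cc a k p \<noteq> 0" using g by auto
  show "cmod (bb a k p) < 1" using g c0 by (simp add: bb_def norm_mult norm_divide)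
  show "bb a k p * cc a k p = \<i> * a" using c0 by (simp add: bb_def)
  show nz: "1 - \<i> * a * p ^ k \<noteq> 0" using c0 by (simp add: cc_def)
  have e: "exp (\<i> * of_nat k * 0) = 1" by simp
  show "p ^ k * WW a k p 0 = 1 / cc a k p"
    unfolding WW_def bb_def cc_def e mult_1_right by (rule alg1) (use nz p in auto)
qed



lemma rep:
  assumes k: "k \<ge> 1" and a: "a \<noteq> 0" and x: "is_solution (the_field a 0 k) x" and p: "x 0 = p" "p \<noteq> 0"
    and g: "cmod (cc a k p) > cmod a"
  shows "x t = p / HH a k p 0 * exp (\<i> * of_real t) * HH a k p (of_real t)"
proof -
  note gf = good_facts[OF k a p(2) g]
  have Wg: "WW a k p (of_real s) \<noteq> 0" "WW a k p (of_real s) \<notin> \<real>\<^sub>\<le>\<^sub>0" for s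
    using W_good(2,3)[OF gf(2)] by auto
  have Hn: "HH a k p z \<noteq> 0" for z by (simp add: HH_def)
  define q where "q t = x t / (exp (\<i> * of_real t) * HH a k p (of_real t))" for t
  have qk: "q s ^ k = 1 / cc a k p" for s
  proof -
    define E where "E = exp (\<i> * of_nat k * of_real s)"
    have E0: "E \<noteq> 0" by (simp add: E_def)
    have "cc a k p * WW a k p (of_real s) = cc a k p + \<i> * a * E"
      using gf(3) by (simp add: WW_def E_def algebra_simps)
    then have y: "x s ^ k * (cc a k p * WW a k p (of_real s)) = E"
      using key1[OF k x p, of s] by (simp add: cc_def E_def)
    have eU: "exp (\<i> * of_real s) ^ k = E"
      by (simp add: E_def exp_of_nat_mult[symmetric] ac_simps)
    have "q s ^ k = x s ^ k / (E * (1 / WW a k p (of_real s)))"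
      unfolding q_def power_divide power_mult_distrib eU H_pow[OF k Wg(1)] ..
    also have "\<dots> = (x s ^ k * (cc a k p * WW a k p (of_real s))) / (cc a k p * E)"
      using Wg(1)[of s] gf(1) E0 by (simp add: field_simps)
    also have "\<dots> = 1 / cc a k p" using y E0 gf(1) by simp
    finally show ?thesis .
  qed
  have cW: "continuous_on UNIV (\<lambda>t. WW a k p (of_real t))" unfolding WW_def by (intro continuous_intros)
  have cL: "continuous_on UNIV (\<lambda>t. Ln (WW a k p (of_real t)))"
    by (rule continuous_on_Ln'[OF cW]) (simp add: Wg)
  have cH: "continuous_on UNIV (\<lambda>t. HH a k p (of_real t))"
    unfolding HH_def
    by (intro continuous_on_exp continuous_on_divide continuous_on_minus cL continuous_on_const) (use k in simp)
  have cq: "continuous_on UNIV q"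
    unfolding q_def
    by (intro continuous_on_divide continuous_on_mult sol_cont[OF x] cH continuous_on_exp continuous_on_mult_left continuous_on_of_real continuous_on_id) (simp add: Hn)
  have "q ` UNIV \<subseteq> {z. z ^ k = 1 / cc a k p}" using qk by auto
  moreover have "finite {z. z ^ k = 1 / cc a k p}" using k by (intro finite_nth_roots) simp
  ultimately have fin: "finite (q ` UNIV)" by (rule finite_subset)
  have "q constant_on UNIV" by (rule continuous_finite_range_constant[OF connected_UNIV cq fin])
  then have "q t = q 0" unfolding constant_on_def by auto
  also have "q 0 = p / HH a k p 0" by (simp add: q_def p(1))
  finally have "x t / (exp (\<i> * of_real t) * HH a k p (of_real t)) = p / HH a k p 0" by (simp add: q_def)
  then show ?thesis using Hn by (simp add: field_simps)
qed



lemma lower: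
  assumes k: "k \<ge> 1" and a: "a \<noteq> 0" and x: "is_solution (the_field a 0 k) x" and p: "x 0 = p" "p \<noteq> 0"
    and g: "cmod (cc a k p) > cmod a" and T: "T > 0" "x T = p"
  shows "T \<ge> 2 * pi"
proof -
  note gf = good_facts[OF k a p(2) g]
  define E where "E = exp (\<i> * of_nat k * of_real T)"
  have "p ^ k * (cc a k p + \<i> * a * E) = E"
    using key1[OF k x p, of T] T(2) by (simp add: cc_def E_def)
  moreover have "p ^ k * cc a k p = 1 - \<i> * a * p ^ k" using p(2) by (simp add: cc_def)
  ultimately have "(1 - \<i> * a * p ^ k) * (1 - E) = 0" by (simp add: algebra_simps)
  then have E1: "E = 1" using gf(4) by simp
  have HT: "HH a k p (of_real T) = HH a k p 0"
    unfolding HH_def WW_def using E1 by (simp add: E_def)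
  have "p = p / HH a k p 0 * exp (\<i> * of_real T) * HH a k p (of_real T)"
    using rep[OF k a x p g, of T] T(2) by simp
  then have "p = p * exp (\<i> * of_real T)" unfolding HT by (simp add: HH_def)
  then have "exp (\<i> * of_real T) = 1" using p(2) by simp
  then obtain m :: int where m: "T = of_int (2 * m) * pi" by (auto simp: exp_eq_1)
  then have "m > 0" using T(1) by (smt (verit, ccfv_SIG) mult_nonpos_nonneg of_int_le_0_iff pi_gt_zero)
  then show ?thesis using m by simp
qed



lemma alg2:
  fixes \<kappa> e H W K E b c a :: complex
  assumes bc: "b * c = \<i> * a" and W: "W \<noteq> 0" and K: "K \<noteq> 0" and c: "c \<noteq> 0"
  shows "\<kappa> * e * (H * (- (inverse W * (0 + b * (\<i> * K * E))) / K)) + \<kappa> * (\<i> * e) * H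
       = \<i> * (\<kappa> * e * H) + a * (\<kappa> * e * H) * (E / (c * W))"
proof -
  have a: "a = - \<i> * b * c" using bc by (simp add: algebra_simps)
  have "a * (\<kappa> * e * H) * (E / (c * W)) = \<kappa> * e * H * (- \<i> * b * E / W)"
    unfolding a using c W by (simp add: field_simps)
  moreover have "\<kappa> * e * (H * (- (inverse W * (0 + b * (\<i> * K * E))) / K)) = \<kappa> * e * H * (- \<i> * b * E / W)"
    using K W by (simp add: field_simps)
  ultimately show ?thesis by (simp add: algebra_simps)
qed

lemma d_exp_lin: "((\<lambda>z. exp (c * z)) has_field_derivative c * exp (c * z)) (at z)"
  by (rule DERIV_cong[OF DERIV_chain2[OF DERIV_exp DERIV_cmult[OF DERIV_ident]]]) simp

lemma exist:
  assumes k: "k \<ge> 1" and a: "a \<noteq> 0" and p: "p \<noteq> 0" and g: "cmod (cc a k p) > cmod a"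
    and X_def: "X = (\<lambda>t::real. p / HH a k p 0 * exp (\<i> * of_real t) * HH a k p (of_real t))"
  shows "is_solution (the_field a 0 k) X" "X 0 = p" "\<And>t. X (t + 2 * pi) = X t"
proof -
  note gf = good_facts[OF k a p g]
  define \<kappa> where "\<kappa> = p / HH a k p 0"
  define K where "K = (of_nat k :: complex)"
  have K0: "K \<noteq> 0" using k by (simp add: K_def)
  have Hn: "HH a k p z \<noteq> 0" for z by (simp add: HH_def)
  have Wg: "WW a k p (of_real s) \<noteq> 0" "WW a k p (of_real s) \<notin> \<real>\<^sub>\<le>\<^sub>0" for s
    using W_good(2,3)[OF gf(2)] by auto
  define \<Phi> where "\<Phi> z = \<kappa> * exp (\<i> * z) * HH a k p z" for z
  have XP: "X = (\<lambda>t. \<Phi> (of_real t))" by (simp add: X_def \<Phi>_def \<kappa>_def fun_eq_iff)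
  show "X 0 = p" using Hn by (simp add: X_def)
  show "X (t + 2 * pi) = X t" for t
  proof -
    have e1: "exp (\<i> * of_real (t + 2 * pi)) = exp (\<i> * of_real t)"
    proof -
      have "\<i> * of_real (t + 2 * pi) = \<i> * of_real t + 2 * of_real pi * \<i>" by (simp add: algebra_simps)
      then show ?thesis by (simp add: exp_add)
    qed
    have e2: "exp (\<i> * of_nat k * of_real (t + 2 * pi)) = exp (\<i> * of_nat k * of_real t)"
    proof -
      have "\<i> * of_nat k * of_real (t + 2 * pi) = \<i> * of_nat k * of_real t + of_nat k * (2 * of_real pi * \<i>)"
        by (simp add: algebra_simps)
      then show ?thesis by (simp add: exp_add exp_of_nat_mult)
    qed
    show ?thesis unfolding X_def HH_def WW_def e1 e2 ..
  qed
  show "is_solution (the_field a 0 k) X"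
    unfolding is_solution_def
  proof
    fix t :: real
    define z where "z = complex_of_real t"
    define E where "E = exp (\<i> * of_nat k * z)"
    define W where "W = WW a k p z"
    have W0: "W \<noteq> 0" "W \<notin> \<real>\<^sub>\<le>\<^sub>0" using Wg[of t] by (auto simp: W_def z_def)
    have dE: "((\<lambda>z. exp (\<i> * of_nat k * z)) has_field_derivative (\<i> * of_nat k) * exp (\<i> * of_nat k * z)) (at z)"
      by (rule d_exp_lin)
    have dW: "((\<lambda>z. WW a k p z) has_field_derivative 0 + bb a k p * ((\<i> * of_nat k) * exp (\<i> * of_nat k * z))) (at z)"
      unfolding WW_def by (rule DERIV_add[OF DERIV_const DERIV_cmult[OF dE]])
    have dL: "((\<lambda>z. Ln (WW a k p z)) has_field_derivative inverse W * (0 + bb a k p * ((\<i> * of_nat k) * exp (\<i> * of_nat k * z)))) (at z)"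
      unfolding W_def by (rule DERIV_chain2[OF has_field_derivative_Ln dW]) (use W0 in \<open>simp add: W_def\<close>)
    have dH: "((\<lambda>z. HH a k p z) has_field_derivative HH a k p z * (- (inverse W * (0 + bb a k p * ((\<i> * of_nat k) * exp (\<i> * of_nat k * z)))) / of_nat k)) (at z)"
      unfolding HH_def by (rule DERIV_chain2[OF DERIV_exp DERIV_cdivide[OF DERIV_minus[OF dL]]])
    have dU: "((\<lambda>z. \<kappa> * exp (\<i> * z)) has_field_derivative \<kappa> * (\<i> * exp (\<i> * z))) (at z)"
      by (rule DERIV_cmult[OF d_exp_lin])
    have dP: "(\<Phi> has_field_derivative (\<kappa> * exp (\<i> * z)) * (HH a k p z * (- (inverse W * (0 + bb a k p * ((\<i> * of_nat k) * exp (\<i> * of_nat k * z)))) / of_nat k))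
        + \<kappa> * (\<i> * exp (\<i> * z)) * HH a k p z) (at z)"
      unfolding \<Phi>_def by (rule DERIV_mult'[OF dU dH])
    have Hk: "HH a k p z ^ k = 1 / W" using H_pow[OF k W0(1)[unfolded W_def]] by (simp add: W_def)
    have H0k: "HH a k p 0 ^ k = 1 / WW a k p 0" using H_pow[OF k, of a p 0] Wg(1)[of 0] by simp
    have kk: "\<kappa> ^ k = 1 / cc a k p"
      unfolding \<kappa>_def power_divide H0k using gf(5) by simp
    have ek: "exp (\<i> * z) ^ k = E" by (simp add: E_def exp_of_nat_mult[symmetric] ac_simps)
    have Pk: "\<Phi> z ^ k = E / (cc a k p * W)"
      unfolding \<Phi>_def power_mult_distrib kk ek Hk by simp
    have "(\<kappa> * exp (\<i> * z)) * (HH a k p z * (- (inverse W * (0 + bb a k p * ((\<i> * of_nat k) * exp (\<i> * of_nat k * z)))) / of_nat k))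
        + \<kappa> * (\<i> * exp (\<i> * z)) * HH a k p z
       = \<i> * (\<kappa> * exp (\<i> * z) * HH a k p z) + a * (\<kappa> * exp (\<i> * z) * HH a k p z) * (E / (cc a k p * W))"
      unfolding E_def by (rule alg2[OF gf(3) W0(1) _ gf(1)]) (use K0 in \<open>simp add: K_def\<close>)
    also have "\<dots> = the_field a 0 k (\<Phi> z)"
      unfolding F1_eq Pk[symmetric] \<Phi>_def by (simp add: algebra_simps)
    finally have "(\<Phi> has_field_derivative the_field a 0 k (\<Phi> z)) (at z)" using dP by simp
    then have "((\<lambda>t. \<Phi> (of_real t)) has_vector_derivative the_field a 0 k (\<Phi> (of_real t))) (at t)"
      unfolding z_def by (rule has_vector_derivative_real_field)
    then show "(X has_vector_derivative the_field a 0 k (X t)) (at t)" unfolding XP by simp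
  qed
qed



lemma Fp_eq: "the_field a 0 k p = \<i> * p * (1 - \<i> * a * p ^ k)"
  unfolding F1_eq by (simp add: algebra_simps)

lemma per_point:
  assumes k: "k \<ge> 1" and a: "a \<noteq> 0" and p: "p \<noteq> 0" and g: "cmod (cc a k p) > cmod a"
  shows "periodic_point (the_field a 0 k) p" "min_period (the_field a 0 k) p = 2 * pi"
proof -
  note gf = good_facts[OF k a p g]
  define X where "X = (\<lambda>t::real. p / HH a k p 0 * exp (\<i> * of_real t) * HH a k p (of_real t))"
  note ex = exist[OF k a p g X_def]
  have isp: "is_period (the_field a 0 k) p (2 * pi)"
    unfolding is_period_def using ex by (auto intro!: exI[of _ X])
  have Fp: "the_field a 0 k p \<noteq> 0" unfolding Fp_eq using p gf(4) by simp
  show "periodic_point (the_field a 0 k) p" using isp Fp unfolding periodic_point_def by blast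
  have lb: "2 * pi \<le> T" if hT: "is_period (the_field a 0 k) p T" for T
  proof -
    obtain x where x: "is_solution (the_field a 0 k) x" "x 0 = p" "\<And>t. x (t + T) = x t" and T: "T > 0"
      using hT unfolding is_period_def by blast
    have "x T = p" using x(3)[of 0] x(2) by simp
    then show ?thesis using lower[OF k a x(1) x(2) p g T] by simp
  qed
  have "Inf {T. is_period (the_field a 0 k) p T} = 2 * pi"
    by (rule cInf_eq_minimum) (use isp lb in auto)
  then show "min_period (the_field a 0 k) p = 2 * pi" unfolding min_period_def by simp
qed

definition PH :: "complex \<Rightarrow> nat \<Rightarrow> complex \<Rightarrow> real" where
  "PH a k z = cmod (1 - \<i> * a * z ^ k) - cmod a * cmod z ^ k"

lemma PH_eq:
  assumes "z \<noteq> 0"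
  shows "PH a k z = cmod z ^ k * (cmod (cc a k z) - cmod a)"
  using assms by (simp add: PH_def cc_def norm_divide norm_power field_simps)

lemma PH_sign:
  assumes "z \<noteq> 0"
  shows "PH a k z > 0 \<longleftrightarrow> cmod (cc a k z) > cmod a" "PH a k z = 0 \<longleftrightarrow> cmod (cc a k z) = cmod a"
  using assms by (auto simp: PH_eq zero_less_mult_iff)

lemma ann_good:
  assumes k: "k \<ge> 1" and a: "a \<noteq> 0" and pa: "p \<in> period_annulus (the_field a 0 k) 0"
  shows "p \<noteq> 0" "cmod (cc a k p) > cmod a"
proof -
  define F where "F = the_field a 0 k"
  obtain U where U: "open U" "connected U" "0 \<in> U" "\<forall>q\<in>U - {0}. periodic_point F q" "p \<in> U" "p \<noteq> 0"
    using pa unfolding period_annulus_def F_def by blast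
  show "p \<noteq> 0" by fact
  define A where "A = {z. PH a k z > 0}"
  define B where "B = {z. PH a k z < 0}"
  have cP: "continuous_on UNIV (PH a k)" unfolding PH_def by (intro continuous_intros)
  have oA: "open A" unfolding A_def by (rule open_Collect_less[OF continuous_on_const cP])
  have oB: "open B" unfolding B_def by (rule open_Collect_less[OF cP continuous_on_const])
  have "U \<subseteq> A \<union> B"
  proof
    fix q assume q: "q \<in> U"
    have "PH a k q \<noteq> 0"
    proof (cases "q = 0")
      case True
      have "0 < k" using k by simp
      then show ?thesis using True by (simp add: PH_def zero_power)
    next
      case False
      then have "periodic_point F q" using U q by blast
      then obtain T x where "is_solution F x" "x 0 = q" unfolding periodic_point_def is_period_def by blast
      then have "cmod (cc a k q) \<noteq> cmod a" using no_sol_eq[OF k a] False unfolding F_def by blast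
      then show ?thesis using PH_sign(2)[OF False] by simp
    qed
    then show "q \<in> A \<union> B" unfolding A_def B_def by auto
  qed
  moreover have "A \<inter> B \<inter> U = {}" unfolding A_def B_def by auto
  ultimately have "A \<inter> U = {} \<or> B \<inter> U = {}" using connectedD[OF U(2) oA oB] by blast
  moreover have "0 \<in> A \<inter> U" using U k by (simp add: A_def PH_def zero_power)
  ultimately have "B \<inter> U = {}" by blast
  then have "p \<in> A" using \<open>U \<subseteq> A \<union> B\<close> U(5) by blast
  then show "cmod (cc a k p) > cmod a" using PH_sign(1)[OF U(6)] by (simp add: A_def)
qed

lemma center_k:
  assumes k: "k \<ge> 1" and a: "a \<noteq> 0"
  shows "center (the_field a 0 k) 0"
proof -
  define r where "r = min 1 (1 / (2 * cmod a + 2))"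
  have pos: "2 * cmod a + 2 > 0" by (smt (verit) norm_ge_zero)
  have r: "r > 0" "r \<le> 1" "r \<le> 1 / (2 * cmod a + 2)" unfolding r_def using pos by auto
  have "periodic_point (the_field a 0 k) p" if p: "p \<in> ball 0 r - {0}" for p
  proof -
    have p0: "p \<noteq> 0" and pr: "cmod p < r" using p by auto
    have "cmod p ^ k \<le> cmod p" using pr r(2) k
      by (metis less_le_trans norm_ge_zero order_less_imp_le power_decreasing power_one_right)
    then have pk: "cmod p ^ k < 1 / (2 * cmod a + 2)" using pr r(3) by linarith
    have "cmod a * cmod p ^ k \<le> cmod a * (1 / (2 * cmod a + 2))"
      using pk by (intro mult_left_mono) auto
    also have "\<dots> < 1 / 2" using pos by (simp add: field_simps)
    finally have h: "cmod a * cmod p ^ k < 1 / 2" .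
    have "1 - cmod a * cmod p ^ k \<le> cmod (1 - \<i> * a * p ^ k)"
      using norm_triangle_ineq2[of 1 "\<i> * a * p ^ k"] by (simp add: norm_mult norm_power)
    then have "PH a k p > 0" unfolding PH_def using h by linarith
    then have "cmod (cc a k p) > cmod a" using PH_sign(1)[OF p0] by simp
    then show ?thesis using per_point(1)[OF k a p0] by blast
  qed
  moreover have "the_field a 0 k 0 = 0" by (simp add: F1_eq)
  ultimately show ?thesis unfolding center_def using r(1) by blast
qed

lemma part1:
  assumes k: "k \<ge> 1" and a: "a \<noteq> 0"
  shows "isochronous_center (the_field a 0 k) 0"
  unfolding isochronous_center_def
proof (intro conjI exI ballI)
  show "center (the_field a 0 k) 0" by (rule center_k[OF k a])
  fix p assume "p \<in> period_annulus (the_field a 0 k) 0"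
  then show "min_period (the_field a 0 k) p = 2 * pi"
    using per_point(2)[OF k a] ann_good[OF k a] by blast
qed


theorem proposition4p1:
  fixes a :: complex and n k :: nat
  assumes "a \<noteq> 0"
  shows
    "(n = 0 \<and> k \<ge> 1 \<longrightarrow> isochronous_center (the_field a n k) 0)
   \<and> (k = 0 \<and> n \<ge> 1 \<longrightarrow>
       (center (the_field a n k) 0 \<longleftrightarrow> Re a = 0)
     \<and> (\<forall>\<alpha>::real. \<alpha> \<noteq> 0 \<and> a = \<alpha> * \<i> \<longrightarrow>
          first_integral (the_field a n k) (\<lambda>z. z * cnj z)
        \<and> (\<forall>p \<in> period_annulus (the_field a n k) 0.
             min_period (the_field a n k) p = 2 * pi / (1 + \<alpha> * (cmod p ^ 2) ^ n))
        \<and> (\<alpha> > 0 \<longrightarrow>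
             global_center (the_field a n k) 0
           \<and> (\<forall>p \<in> period_annulus (the_field a n k) 0. \<forall>q \<in> period_annulus (the_field a n k) 0.
                cmod p < cmod q \<longrightarrow> min_period (the_field a n k) q < min_period (the_field a n k) p)
           \<and> ((min_period (the_field a n k)) \<longlongrightarrow> 0) at_infinity)
        \<and> (\<alpha> < 0 \<longrightarrow>
             period_annulus (the_field a n k) 0 = {z. 0 < cmod z ^ 2 \<and> cmod z ^ 2 < (-1/\<alpha>) powr (1/n)}
           \<and> (\<forall>z. cmod z ^ 2 = (-1/\<alpha>) powr (1/n) \<longrightarrow> the_field a n k z = 0)
           \<and> (\<forall>p \<in> period_annulus (the_field a n k) 0. \<forall>q \<in> period_annulus (the_field a n k) 0.
                cmod p < cmod q \<longrightarrow> min_period (the_field a n k) p < min_period (the_field a n k) q)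
           \<and> (\<forall>b. cmod b ^ 2 = (-1/\<alpha>) powr (1/n) \<longrightarrow>
                filterlim (min_period (the_field a n k)) at_top
                  (at b within period_annulus (the_field a n k) 0)))))"
  proof (rule conjI; rule impI)
  assume "n = 0 \<and> k \<ge> 1"
  then show "isochronous_center (the_field a n k) 0" using part1 assms by auto
next
  assume h: "k = 0 \<and> 1 \<le> n"
  then have k0: "k = 0" and n1: "n \<ge> 1" by auto
  show "(center (the_field a n k) 0 \<longleftrightarrow> Re a = 0)
     \<and> (\<forall>\<alpha>::real. \<alpha> \<noteq> 0 \<and> a = \<alpha> * \<i> \<longrightarrow>
          first_integral (the_field a n k) (\<lambda>z. z * cnj z)
        \<and> (\<forall>p \<in> period_annulus (the_field a n k) 0.
             min_period (the_field a n k) p = 2 * pi / (1 + \<alpha> * (cmod p ^ 2) ^ n))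
        \<and> (\<alpha> > 0 \<longrightarrow>
             global_center (the_field a n k) 0
           \<and> (\<forall>p \<in> period_annulus (the_field a n k) 0. \<forall>q \<in> period_annulus (the_field a n k) 0.
                cmod p < cmod q \<longrightarrow> min_period (the_field a n k) q < min_period (the_field a n k) p)
           \<and> ((min_period (the_field a n k)) \<longlongrightarrow> 0) at_infinity)
        \<and> (\<alpha> < 0 \<longrightarrow>
             period_annulus (the_field a n k) 0 = {z. 0 < cmod z ^ 2 \<and> cmod z ^ 2 < (-1/\<alpha>) powr (1/n)}
           \<and> (\<forall>z. cmod z ^ 2 = (-1/\<alpha>) powr (1/n) \<longrightarrow> the_field a n k z = 0)
           \<and> (\<forall>p \<in> period_annulus (the_field a n k) 0. \<forall>q \<in> period_annulus (the_field a n k) 0.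
                cmod p < cmod q \<longrightarrow> min_period (the_field a n k) p < min_period (the_field a n k) q)
           \<and> (\<forall>b. cmod b ^ 2 = (-1/\<alpha>) powr (1/n) \<longrightarrow>
                filterlim (min_period (the_field a n k)) at_top
                  (at b within period_annulus (the_field a n k) 0))))"
    unfolding k0 by (rule conjI[OF part2[OF assms n1] part2_all[OF n1]])
qed

end
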